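(* Let $X_0,X_1$ be compatible Banach spaces, $\alpha_0>0$, $\alpha_0>\alpha_1$, $1\leqslant p<\infty$, $0<\theta<1$, $h>0$, and let $\varphi$ be a function on $\mathbb{R}^d$ with $\varphi_{x,r}(y)=\varphi\big(\frac{y-x}{r}\big)$. Assume that for every finite family $\mathfrak{B}$ of pairwise disjoint balls with radii less than $1$, $$\Big\|\sum_{B_{r_j}(x_j)\in\mathfrak{B}}\varphi_{x_j,r_j}\Big\|_{X_0}\lesssim\Big(\sum_{B_{r_j}(x_j)\in\mathfrak{B}}r_j^{\alpha_0}\Big)^{1/p},\qquad \Big\|\sum_{B_{r_j}(x_j)\in\mathfrak{B}}\varphi_{x_j,r_j}\Big\|_{X_1}\lesssim\Big(\sum_{B_{r_j}(x_j)\in\mathfrak{B}}r_j^{\alpha_1}\Big)^{1/p}$$ with constants independent of $\mathfrak{B}$. Let $\alpha_\theta=(1-\theta)\alpha_0+\theta\alpha_1$ and suppose $\alpha_\theta>0$. Then, with constants independent of $\mathfrak{B}$, $$\Big\|\sum_{B_{r_j}(x_j)\in\mathfrak{B}}\varphi_{x_j,r_j}\Big\|_{(X_0,X_1)_{\theta,h}}\lesssim\big\|\{r_j: B_{r_j}(x_j)\in\mathfrak{B}\}\big\|^{\alpha_\theta/p}_{\ell_{\alpha_\theta,\frac{h\alpha_\theta}{p}}}.$$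
   Context: Two (quasi-)Banach spaces are compatible if both are subspaces of a common Hausdorff topological vector space. $K(t,a)=\inf\{\|a_0\|_{X_0}+t\|a_1\|_{X_1}: a=a_0+a_1\}$ and $\|a\|_{(X_0,X_1)_{\theta,h}}=\big(\int_0^\infty(t^{-\theta}K(t,a))^h\frac{dt}{t}\big)^{1/h}$. Lorentz sequence space: $\|a\|^q_{\ell_{\alpha,q}}=q\int_0^\infty(m_a(t)t^\alpha)^{q/\alpha}\frac{dt}{t}$, $m_a(t)=\#\{j:|a_j|\geqslant t\}$. *)

theory Defs
  imports "HOL-Analysis.Analysis"
begin

definition banach_subspace :: "'v::real_vector set \<Rightarrow> ('v \<Rightarrow> real) \<Rightarrow> bool" where
  "banach_subspace X nX \<longleftrightarrow>
     subspace X \<and>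
     (\<forall>x\<in>X. nX x \<ge> 0) \<and>
     (\<forall>x\<in>X. nX x = 0 \<longleftrightarrow> x = 0) \<and>
     (\<forall>x\<in>X. \<forall>c. nX (c *\<^sub>R x) = \<bar>c\<bar> * nX x) \<and>
     (\<forall>x\<in>X. \<forall>y\<in>X. nX (x + y) \<le> nX x + nX y) \<and>
     (\<forall>f. (\<forall>k. f k \<in> X) \<longrightarrow>
          (\<forall>e>0. \<exists>N. \<forall>m\<ge>N. \<forall>k\<ge>N. nX (f m - f k) < e) \<longrightarrow>
          (\<exists>x\<in>X. (\<lambda>k. nX (f k - x)) \<longlonglongrightarrow> 0))"

definition hausdorff_tvs :: "'v::real_vector topology \<Rightarrow> bool" where
  "hausdorff_tvs T \<longleftrightarrow>
     topspace T = UNIV \<and> Hausdorff_space T \<and>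
     continuous_map (prod_topology T T) T (\<lambda>(x, y). x + y) \<and>
     continuous_map (prod_topology euclideanreal T) T (\<lambda>(c, x). c *\<^sub>R x)"

text \<open>Continuity of the inclusion of a normed subspace into (V,T); normed spaces are
first countable, so sequential continuity is continuity.\<close>
definition cont_embedded :: "'v::real_vector set \<Rightarrow> ('v \<Rightarrow> real) \<Rightarrow> 'v topology \<Rightarrow> bool" where
  "cont_embedded X nX T \<longleftrightarrow>
     (\<forall>f x. (\<forall>k. f k \<in> X) \<longrightarrow> x \<in> X \<longrightarrow> (\<lambda>k. nX (f k - x)) \<longlonglongrightarrow> 0 \<longrightarrow>
            limitin T f x sequentially)"

definition compatible_banach ::
  "'v::real_vector set \<Rightarrow> ('v \<Rightarrow> real) \<Rightarrow> 'v set \<Rightarrow> ('v \<Rightarrow> real) \<Rightarrow> bool" where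
  "compatible_banach X0 n0 X1 n1 \<longleftrightarrow>
     banach_subspace X0 n0 \<and> banach_subspace X1 n1 \<and>
     (\<exists>T. hausdorff_tvs T \<and> cont_embedded X0 n0 T \<and> cont_embedded X1 n1 T)"

definition Kfun ::
  "'v::real_vector set \<Rightarrow> ('v \<Rightarrow> real) \<Rightarrow> 'v set \<Rightarrow> ('v \<Rightarrow> real) \<Rightarrow> real \<Rightarrow> 'v \<Rightarrow> real" where
  "Kfun X0 n0 X1 n1 t a =
     Inf {n0 a0 + t * n1 a1 | a0 a1. a0 \<in> X0 \<and> a1 \<in> X1 \<and> a = a0 + a1}"

definition interp_norm ::
  "'v::real_vector set \<Rightarrow> ('v \<Rightarrow> real) \<Rightarrow> 'v set \<Rightarrow> ('v \<Rightarrow> real) \<Rightarrow> real \<Rightarrow> real \<Rightarrow> 'v \<Rightarrow> ennreal" where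
  "interp_norm X0 n0 X1 n1 \<theta> h a =
     (let I = (\<integral>\<^sup>+ t\<in>{0<..}. ennreal ((t powr (-\<theta>) * Kfun X0 n0 X1 n1 t a) powr h / t) \<partial>lborel)
      in if I = \<infinity> then \<infinity> else ennreal (enn2real I powr (1 / h)))"

definition distr_count :: "'j set \<Rightarrow> ('j \<Rightarrow> real) \<Rightarrow> real \<Rightarrow> nat" where
  "distr_count J a t = card {j \<in> J. \<bar>a j\<bar> \<ge> t}"

definition lorentz_norm :: "real \<Rightarrow> real \<Rightarrow> 'j set \<Rightarrow> ('j \<Rightarrow> real) \<Rightarrow> real" where
  "lorentz_norm \<alpha> q J a =
     (q * enn2real (\<integral>\<^sup>+ t\<in>{0<..}.
        ennreal ((real (distr_count J a t) * t powr \<alpha>) powr (q / \<alpha>) / t) \<partial>lborel)) powr (1 / q)"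

definition phi_xr :: "(real^'d \<Rightarrow> real) \<Rightarrow> real^'d \<Rightarrow> real \<Rightarrow> real^'d \<Rightarrow> real" where
  "phi_xr \<phi> x r = (\<lambda>y. \<phi> ((1 / r) *\<^sub>R (y - x)))"

definition admissible_balls :: "((real^'d) \<times> real) set \<Rightarrow> bool" where
  "admissible_balls \<B> \<longleftrightarrow> finite \<B> \<and> (\<forall>(x, r)\<in>\<B>. 0 < r \<and> r < 1) \<and>
     (\<forall>(x, r)\<in>\<B>. \<forall>(y, s)\<in>\<B>. (x, r) \<noteq> (y, s) \<longrightarrow> ball x r \<inter> ball y s = {})"

definition ball_sum :: "(real^'d \<Rightarrow> real) \<Rightarrow> ((real^'d) \<times> real) set \<Rightarrow> real^'d \<Rightarrow> real" where
  "ball_sum \<phi> \<B> = (\<lambda>y. \<Sum>(x, r)\<in>\<B>. phi_xr \<phi> x r y)"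

end

theory Submission
  imports Defs
begin


lemma pow_int0:
  fixes c T :: real assumes "c > 0" "T \<ge> 0"
  shows "(\<integral>\<^sup>+x. ennreal (indicator {0..T} x * x powr (c - 1)) \<partial>lborel) = ennreal (T powr c / c)"
proof -
  have "((\<lambda>x. x powr (c-1)) has_integral (T powr (c - 1 + 1) / (c - 1 + 1))) {0..T}"
    by (rule has_integral_powr_from_0) (use assms in auto)
  then have "(\<integral>\<^sup>+x. ennreal (indicator {0..T} x * x powr (c - 1)) \<partial>lborel) = ennreal (T powr (c - 1 + 1) / (c - 1 + 1))"
    by (intro nn_integral_has_integral_lebesgue) auto
  then show ?thesis by simp
qed

lemma pow_int_inf:
  fixes c T :: real assumes "c > 0" "T > 0"
  shows "(\<integral>\<^sup>+x. ennreal (indicator {T..} x * x powr (-c - 1)) \<partial>lborel) = ennreal (T powr (-c) / c)"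
proof -
  have "((\<lambda>x. x powr (-c-1)) has_integral (-(T powr (-c - 1 + 1)) / (-c - 1 + 1))) {T..}"
    by (rule has_integral_powr_to_inf) (use assms in auto)
  then have "(\<integral>\<^sup>+x. ennreal (indicator {T..} x * x powr (-c - 1)) \<partial>lborel) = ennreal (-(T powr (-c - 1 + 1)) / (-c - 1 + 1))"
    by (intro nn_integral_has_integral_lebesgue) auto
  then show ?thesis by simp
qed

lemma pow_int_ftc:
  fixes c s r :: real assumes "c > 0" "0 < s" "s \<le> r"
  shows "(\<integral>\<^sup>+x. ennreal (indicator {s..r} x * (c * x powr (c - 1))) \<partial>lborel) = ennreal (r powr c - s powr c)"
proof -
  have "((\<lambda>x. c * x powr (c - 1)) has_integral (r powr c - s powr c)) {s..r}"
  proof (rule fundamental_theorem_of_calculus)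
    show "s \<le> r" by fact
    fix x assume "x \<in> {s..r}"
    then have "x > 0" using assms by auto
    then have "((\<lambda>x. x powr c) has_real_derivative c * x powr (c - 1)) (at x)"
      by (auto intro!: derivative_eq_intros)
    then show "((\<lambda>x. x powr c) has_vector_derivative c * x powr (c - 1)) (at x within {s..r})"
      by (simp add: has_real_derivative_iff_has_vector_derivative has_vector_derivative_at_within)
  qed
  then show ?thesis
    by (intro nn_integral_has_integral_lebesgue) (use assms in auto)
qed



lemma card_eq_sum_ind:
  fixes r :: "'j \<Rightarrow> real"
  assumes "finite J"
  shows "real (card {j\<in>J. x \<le> r j}) = (\<Sum>j\<in>J. indicator {..r j} x)"
proof -
  have "real (card {j\<in>J. x \<le> r j}) = (\<Sum>j\<in>{j\<in>J. x \<le> r j}. 1)" by simp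
  also have "\<dots> = (\<Sum>j\<in>J. if x \<le> r j then 1 else 0)"
    using assms by (simp add: sum.If_cases Int_def conj_commute)
  also have "\<dots> = (\<Sum>j\<in>J. indicator {..r j} x)"
    by (auto simp: indicator_def intro!: sum.cong)
  finally show ?thesis .
qed

lemma card_measurable[measurable]:
  fixes r :: "'j \<Rightarrow> real"
  assumes "finite J"
  shows "(\<lambda>x. real (card {j\<in>J. x \<le> r j})) \<in> borel_measurable borel"
  unfolding card_eq_sum_ind[OF assms] by (auto intro!: borel_measurable_sum borel_measurable_indicator simp: atMost_borel)

lemma card_mono_x:
  assumes "finite J" "(x::real) \<le> y"
  shows "card {j\<in>J. y \<le> r j} \<le> card {j\<in>J. x \<le> r j}"
  by (intro card_mono) (use assms in auto)



lemma partA: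
  fixes J :: "'j set" and r :: "'j \<Rightarrow> real"
  assumes fin: "finite J" and pos: "\<forall>j\<in>J. r j > 0" and sig: "\<sigma> > 0"
    and e: "0 < \<epsilon>" "\<epsilon> < \<alpha>0 - \<alpha>" and al: "\<alpha> > 0" and L: "L \<ge> 0"
    and bnd: "\<And>x. 0 < x \<Longrightarrow> x \<le> \<sigma> \<Longrightarrow> real (card {j\<in>J. x \<le> r j}) \<le> L * \<sigma> powr \<epsilon> * x powr (-\<alpha>-\<epsilon>)"
  shows "(\<Sum>j\<in>{j\<in>J. r j < \<sigma>}. r j powr \<alpha>0) \<le> \<alpha>0 / (\<alpha>0-\<alpha>-\<epsilon>) * L * \<sigma> powr (\<alpha>0 - \<alpha>)"
proof -
  define A where "A = {j\<in>J. r j < \<sigma>}"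
  have finA: "finite A" using fin by (simp add: A_def)
  have a0: "\<alpha>0 > 0" using e al by linarith
  define c where "c = \<alpha>0 - \<alpha> - \<epsilon>"
  have c: "c > 0" using e by (simp add: c_def)
  have eachj: "ennreal (r j powr \<alpha>0) = (\<integral>\<^sup>+x. ennreal (\<alpha>0 * (indicator {0..r j} x * x powr (\<alpha>0 - 1))) \<partial>lborel)"
    if "j \<in> A" for j
  proof -
    have rj: "r j > 0" using that pos by (auto simp: A_def)
    have "(\<integral>\<^sup>+x. ennreal (\<alpha>0 * (indicator {0..r j} x * x powr (\<alpha>0 - 1))) \<partial>lborel)
        = ennreal \<alpha>0 * (\<integral>\<^sup>+x. ennreal (indicator {0..r j} x * x powr (\<alpha>0 - 1)) \<partial>lborel)"
      using a0 by (subst nn_integral_cmult[symmetric]) (auto simp: ennreal_mult)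
    also have "\<dots> = ennreal \<alpha>0 * ennreal (r j powr \<alpha>0 / \<alpha>0)"
      using a0 rj by (subst pow_int0) auto
    also have "\<dots> = ennreal (r j powr \<alpha>0)"
      using a0 by (simp add: ennreal_mult[symmetric])
    finally show ?thesis by simp
  qed
  have "ennreal (\<Sum>j\<in>A. r j powr \<alpha>0) = (\<Sum>j\<in>A. ennreal (r j powr \<alpha>0))"
    by (rule sum_ennreal[symmetric]) auto
  also have "\<dots> = (\<Sum>j\<in>A. \<integral>\<^sup>+x. ennreal (\<alpha>0 * (indicator {0..r j} x * x powr (\<alpha>0 - 1))) \<partial>lborel)"
    using eachj by (auto intro!: sum.cong)
  also have "\<dots> = (\<integral>\<^sup>+x. (\<Sum>j\<in>A. ennreal (\<alpha>0 * (indicator {0..r j} x * x powr (\<alpha>0 - 1)))) \<partial>lborel)"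
    by (rule nn_integral_sum[symmetric]) auto
  also have "\<dots> \<le> (\<integral>\<^sup>+x. ennreal (\<alpha>0 * L * \<sigma> powr \<epsilon> * (indicator {0..\<sigma>} x * x powr (c - 1))) \<partial>lborel)"
  proof (rule nn_integral_mono)
    fix x :: real
    have "(\<Sum>j\<in>A. \<alpha>0 * (indicator {0..r j} x * x powr (\<alpha>0 - 1)))
        \<le> \<alpha>0 * L * \<sigma> powr \<epsilon> * (indicator {0..\<sigma>} x * x powr (c - 1))"
    proof (cases "0 < x \<and> x \<le> \<sigma>")
      case True
      have "(\<Sum>j\<in>A. \<alpha>0 * (indicator {0..r j} x * x powr (\<alpha>0 - 1)))
          = \<alpha>0 * x powr (\<alpha>0 - 1) * (\<Sum>j\<in>A. indicator {..r j} x)"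
        using True by (auto simp: sum_distrib_left indicator_def intro!: sum.cong)
      also have "(\<Sum>j\<in>A. indicator {..r j} x) = real (card {j\<in>A. x \<le> r j})"
        by (rule card_eq_sum_ind[symmetric]) (rule finA)
      also have "real (card {j\<in>A. x \<le> r j}) \<le> real (card {j\<in>J. x \<le> r j})"
        using fin by (auto simp: A_def intro!: card_mono)
      also have "\<dots> \<le> L * \<sigma> powr \<epsilon> * x powr (-\<alpha>-\<epsilon>)" using bnd True by auto
      finally have "(\<Sum>j\<in>A. \<alpha>0 * (indicator {0..r j} x * x powr (\<alpha>0 - 1)))
          \<le> \<alpha>0 * x powr (\<alpha>0 - 1) * (L * \<sigma> powr \<epsilon> * x powr (-\<alpha>-\<epsilon>))"
        using a0 by (simp add: mult_left_mono)
      also have "\<dots> = \<alpha>0 * L * \<sigma> powr \<epsilon> * (x powr (\<alpha>0 - 1) * x powr (-\<alpha>-\<epsilon>))" by simp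
      also have "x powr (\<alpha>0 - 1) * x powr (-\<alpha>-\<epsilon>) = x powr (c - 1)"
      proof -
        have E: "\<alpha>0 - 1 + (-\<alpha>-\<epsilon>) = c - 1" by (simp add: c_def)
        have "x powr (\<alpha>0 - 1) * x powr (-\<alpha>-\<epsilon>) = x powr (\<alpha>0 - 1 + (-\<alpha>-\<epsilon>))" by (simp add: powr_add)
        then show ?thesis by (simp only: E)
      qed
      finally show ?thesis using True by simp
    next
      case False
      then have "x \<le> 0 \<or> x > \<sigma>" by auto
      then have "(\<Sum>j\<in>A. \<alpha>0 * (indicator {0..r j} x * x powr (\<alpha>0 - 1))) = 0"
      proof
        assume "x \<le> 0"
        then show ?thesis by (auto simp: indicator_def intro!: sum.neutral)
      next
        assume "x > \<sigma>"
        then show ?thesis by (auto simp: indicator_def A_def intro!: sum.neutral)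
      qed
      moreover have "0 \<le> \<alpha>0 * L * \<sigma> powr \<epsilon> * (indicator {0..\<sigma>} x * x powr (c - 1))"
        using a0 L by (auto simp: indicator_def)
      ultimately show ?thesis by simp
    qed
    moreover have "(\<Sum>j\<in>A. ennreal (\<alpha>0 * (indicator {0..r j} x * x powr (\<alpha>0 - 1))))
       = ennreal (\<Sum>j\<in>A. \<alpha>0 * (indicator {0..r j} x * x powr (\<alpha>0 - 1)))"
      by (rule sum_ennreal) (use a0 in \<open>auto simp: indicator_def\<close>)
    ultimately show "(\<Sum>j\<in>A. ennreal (\<alpha>0 * (indicator {0..r j} x * x powr (\<alpha>0 - 1))))
        \<le> ennreal (\<alpha>0 * L * \<sigma> powr \<epsilon> * (indicator {0..\<sigma>} x * x powr (c - 1)))"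
      by (metis ennreal_leI)
  qed
  also have "\<dots> = ennreal (\<alpha>0 * L * \<sigma> powr \<epsilon>) * (\<integral>\<^sup>+x. ennreal (indicator {0..\<sigma>} x * x powr (c - 1)) \<partial>lborel)"
    using a0 L by (subst nn_integral_cmult[symmetric]) (auto simp: ennreal_mult)
  also have "\<dots> = ennreal (\<alpha>0 * L * \<sigma> powr \<epsilon>) * ennreal (\<sigma> powr c / c)"
    using c sig by (subst pow_int0) auto
  also have "\<dots> = ennreal (\<alpha>0 / (\<alpha>0-\<alpha>-\<epsilon>) * L * \<sigma> powr (\<alpha>0 - \<alpha>))"
  proof -
    have "\<sigma> powr \<epsilon> * \<sigma> powr c = \<sigma> powr (\<alpha>0 - \<alpha>)" by (simp add: powr_add[symmetric] c_def)
    then show ?thesis using a0 L c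
      by (subst ennreal_mult[symmetric]) (auto simp: c_def field_simps)
  qed
  finally show ?thesis unfolding A_def[symmetric]
    using a0 L c by (subst (asm) ennreal_le_iff) (auto simp: c_def)
qed



lemma partB:
  fixes J :: "'j set" and r :: "'j \<Rightarrow> real"
  assumes fin: "finite J" and sig: "\<sigma> > 0"
    and e: "0 < \<epsilon>" "\<epsilon> < \<alpha> - \<alpha>1" and L: "L \<ge> 0"
    and bnd: "\<And>x. \<sigma> \<le> x \<Longrightarrow> real (card {j\<in>J. x \<le> r j}) \<le> L * \<sigma> powr (-\<epsilon>) * x powr (\<epsilon> - \<alpha>)"
  shows "(\<Sum>j\<in>{j\<in>J. \<sigma> \<le> r j}. r j powr \<alpha>1) \<le> (1 + max \<alpha>1 0 / (\<alpha> - \<alpha>1 - \<epsilon>)) * L * \<sigma> powr (\<alpha>1 - \<alpha>)"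
proof -
  define A where "A = {j\<in>J. \<sigma> \<le> r j}"
  have finA: "finite A" using fin by (simp add: A_def)
  define c where "c = \<alpha> - \<alpha>1 - \<epsilon>"
  have c: "c > 0" using e by (simp add: c_def)
  have cardA: "real (card A) * \<sigma> powr \<alpha>1 \<le> L * \<sigma> powr (\<alpha>1 - \<alpha>)"
  proof -
    have "real (card A) \<le> L * \<sigma> powr (-\<epsilon>) * \<sigma> powr (\<epsilon> - \<alpha>)"
      using bnd[of \<sigma>] by (simp add: A_def)
    also have "\<dots> = L * \<sigma> powr (-\<alpha>)" by (simp add: mult.assoc powr_add[symmetric])
    finally have "real (card A) * \<sigma> powr \<alpha>1 \<le> L * \<sigma> powr (-\<alpha>) * \<sigma> powr \<alpha>1"
      by (simp add: mult_right_mono)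
    also have "\<dots> = L * \<sigma> powr (\<alpha>1 - \<alpha>)" by (simp add: mult.assoc powr_add[symmetric])
    finally show ?thesis .
  qed
  show ?thesis
  proof (cases "\<alpha>1 \<le> 0")
    case True
    have "(\<Sum>j\<in>A. r j powr \<alpha>1) \<le> (\<Sum>j\<in>A. \<sigma> powr \<alpha>1)"
      using True sig by (intro sum_mono) (auto simp: A_def intro!: powr_mono2')
    also have "\<dots> = real (card A) * \<sigma> powr \<alpha>1" by simp
    finally show ?thesis using cardA True unfolding A_def by simp
  next
    case False
    then have a1: "\<alpha>1 > 0" by simp
    have eachj: "ennreal (r j powr \<alpha>1) = ennreal (\<sigma> powr \<alpha>1) + (\<integral>\<^sup>+x. ennreal (indicator {\<sigma>..r j} x * (\<alpha>1 * x powr (\<alpha>1 - 1))) \<partial>lborel)"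
      if "j \<in> A" for j
    proof -
      have rj: "\<sigma> \<le> r j" using that by (auto simp: A_def)
      have "\<sigma> powr \<alpha>1 \<le> r j powr \<alpha>1" using rj sig a1 by (intro powr_mono2) auto
      then have "ennreal (r j powr \<alpha>1) = ennreal (\<sigma> powr \<alpha>1) + ennreal (r j powr \<alpha>1 - \<sigma> powr \<alpha>1)"
        by (subst ennreal_plus[symmetric]) auto
      then show ?thesis using pow_int_ftc[OF a1 sig rj] by simp
    qed
    have "ennreal (\<Sum>j\<in>A. r j powr \<alpha>1) = (\<Sum>j\<in>A. ennreal (r j powr \<alpha>1))"
      by (rule sum_ennreal[symmetric]) auto
    also have "\<dots> = (\<Sum>j\<in>A. ennreal (\<sigma> powr \<alpha>1)) + (\<Sum>j\<in>A. \<integral>\<^sup>+x. ennreal (indicator {\<sigma>..r j} x * (\<alpha>1 * x powr (\<alpha>1 - 1))) \<partial>lborel)"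
      using eachj by (simp add: sum.distrib)
    also have "(\<Sum>j\<in>A. ennreal (\<sigma> powr \<alpha>1)) = ennreal (real (card A) * \<sigma> powr \<alpha>1)"
      by (simp add: ennreal_mult ennreal_of_nat_eq_real_of_nat)
    also have "(\<Sum>j\<in>A. \<integral>\<^sup>+x. ennreal (indicator {\<sigma>..r j} x * (\<alpha>1 * x powr (\<alpha>1 - 1))) \<partial>lborel)
        = (\<integral>\<^sup>+x. (\<Sum>j\<in>A. ennreal (indicator {\<sigma>..r j} x * (\<alpha>1 * x powr (\<alpha>1 - 1)))) \<partial>lborel)"
      by (rule nn_integral_sum[symmetric]) auto
    also have "\<dots> \<le> (\<integral>\<^sup>+x. ennreal (\<alpha>1 * L * \<sigma> powr (-\<epsilon>) * (indicator {\<sigma>..} x * x powr (-c - 1))) \<partial>lborel)"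
    proof (rule nn_integral_mono)
      fix x :: real
      have "(\<Sum>j\<in>A. indicator {\<sigma>..r j} x * (\<alpha>1 * x powr (\<alpha>1 - 1)))
          \<le> \<alpha>1 * L * \<sigma> powr (-\<epsilon>) * (indicator {\<sigma>..} x * x powr (-c - 1))"
      proof (cases "\<sigma> \<le> x")
        case True
        have "(\<Sum>j\<in>A. indicator {\<sigma>..r j} x * (\<alpha>1 * x powr (\<alpha>1 - 1)))
            = \<alpha>1 * x powr (\<alpha>1 - 1) * (\<Sum>j\<in>A. indicator {..r j} x)"
          using True by (auto simp: sum_distrib_left indicator_def intro!: sum.cong)
        also have "(\<Sum>j\<in>A. indicator {..r j} x) = real (card {j\<in>A. x \<le> r j})"
          by (rule card_eq_sum_ind[symmetric]) (rule finA)
        also have "real (card {j\<in>A. x \<le> r j}) \<le> real (card {j\<in>J. x \<le> r j})"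
          using fin by (auto simp: A_def intro!: card_mono)
        also have "\<dots> \<le> L * \<sigma> powr (-\<epsilon>) * x powr (\<epsilon> - \<alpha>)" using bnd True by auto
        finally have "(\<Sum>j\<in>A. indicator {\<sigma>..r j} x * (\<alpha>1 * x powr (\<alpha>1 - 1)))
            \<le> \<alpha>1 * x powr (\<alpha>1 - 1) * (L * \<sigma> powr (-\<epsilon>) * x powr (\<epsilon> - \<alpha>))"
          using a1 by (simp add: mult_left_mono)
        also have "\<dots> = \<alpha>1 * L * \<sigma> powr (-\<epsilon>) * (x powr (\<alpha>1 - 1) * x powr (\<epsilon> - \<alpha>))" by simp
        also have "x powr (\<alpha>1 - 1) * x powr (\<epsilon> - \<alpha>) = x powr (-c - 1)"
        proof -
          have E: "\<alpha>1 - 1 + (\<epsilon> - \<alpha>) = -c - 1" by (simp add: c_def)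
          have "x powr (\<alpha>1 - 1) * x powr (\<epsilon> - \<alpha>) = x powr (\<alpha>1 - 1 + (\<epsilon> - \<alpha>))" by (simp add: powr_add)
          then show ?thesis by (simp only: E)
        qed
        finally show ?thesis using True by simp
      next
        case False
        then show ?thesis by (auto simp: indicator_def intro!: sum.neutral)
      qed
      moreover have "(\<Sum>j\<in>A. ennreal (indicator {\<sigma>..r j} x * (\<alpha>1 * x powr (\<alpha>1 - 1))))
         = ennreal (\<Sum>j\<in>A. indicator {\<sigma>..r j} x * (\<alpha>1 * x powr (\<alpha>1 - 1)))"
        by (rule sum_ennreal) (use a1 in \<open>auto simp: indicator_def\<close>)
      ultimately show "(\<Sum>j\<in>A. ennreal (indicator {\<sigma>..r j} x * (\<alpha>1 * x powr (\<alpha>1 - 1))))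
          \<le> ennreal (\<alpha>1 * L * \<sigma> powr (-\<epsilon>) * (indicator {\<sigma>..} x * x powr (-c - 1)))"
        by (metis ennreal_leI)
    qed
    also have "\<dots> = ennreal (\<alpha>1 * L * \<sigma> powr (-\<epsilon>)) * (\<integral>\<^sup>+x. ennreal (indicator {\<sigma>..} x * x powr (-c - 1)) \<partial>lborel)"
      using a1 L by (subst nn_integral_cmult[symmetric]) (auto simp: ennreal_mult)
    also have "\<dots> = ennreal (\<alpha>1 * L * \<sigma> powr (-\<epsilon>)) * ennreal (\<sigma> powr (-c) / c)"
      using c sig by (subst pow_int_inf) auto
    also have "\<dots> = ennreal (\<alpha>1 / c * L * \<sigma> powr (\<alpha>1 - \<alpha>))"
    proof -
      have "\<sigma> powr (-\<epsilon>) * \<sigma> powr (-c) = \<sigma> powr (\<alpha>1 - \<alpha>)" by (simp add: powr_add[symmetric] c_def)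
      then show ?thesis using a1 L c
        by (subst ennreal_mult[symmetric]) (auto simp: field_simps)
    qed
    finally have "ennreal (\<Sum>j\<in>A. r j powr \<alpha>1) \<le> ennreal (real (card A) * \<sigma> powr \<alpha>1) + ennreal (\<alpha>1 / c * L * \<sigma> powr (\<alpha>1 - \<alpha>))"
      by simp
    also have "\<dots> = ennreal (real (card A) * \<sigma> powr \<alpha>1 + \<alpha>1 / c * L * \<sigma> powr (\<alpha>1 - \<alpha>))"
      using a1 L c by (subst ennreal_plus) auto
    finally have "(\<Sum>j\<in>A. r j powr \<alpha>1) \<le> real (card A) * \<sigma> powr \<alpha>1 + \<alpha>1 / c * L * \<sigma> powr (\<alpha>1 - \<alpha>)"
      using a1 L c by (subst (asm) ennreal_le_iff) auto
    also have "\<dots> \<le> L * \<sigma> powr (\<alpha>1 - \<alpha>) + \<alpha>1 / c * L * \<sigma> powr (\<alpha>1 - \<alpha>)"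
      using cardA by simp
    also have "\<dots> = (1 + max \<alpha>1 0 / (\<alpha> - \<alpha>1 - \<epsilon>)) * L * \<sigma> powr (\<alpha>1 - \<alpha>)"
      using a1 by (simp add: c_def algebra_simps max_def)
    finally show ?thesis unfolding A_def .
  qed
qed



lemma bnd_small:
  fixes x \<sigma> :: real
  assumes "0 < x" "x \<le> \<sigma>" "k * x powr \<alpha> * min (x/\<sigma>) (\<sigma>/x) powr \<epsilon> \<le> L"
  shows "k \<le> L * \<sigma> powr \<epsilon> * x powr (-\<alpha>-\<epsilon>)"
proof -
  have s: "\<sigma> > 0" using assms by simp
  have m: "min (x/\<sigma>) (\<sigma>/x) = x/\<sigma>"
  proof -
    have "x/\<sigma> \<le> 1" using assms s by simp
    moreover have "1 \<le> \<sigma>/x" using assms by simp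
    ultimately show ?thesis by simp
  qed
  define P where "P = x powr \<alpha> * (x/\<sigma>) powr \<epsilon>"
  have P: "P > 0" using assms s by (simp add: P_def)
  have "L * \<sigma> powr \<epsilon> * x powr (-\<alpha>-\<epsilon>) * P = L * (\<sigma> powr \<epsilon> * (x/\<sigma>) powr \<epsilon>) * (x powr (-\<alpha>-\<epsilon>) * x powr \<alpha>)"
    by (simp add: P_def)
  also have "\<sigma> powr \<epsilon> * (x/\<sigma>) powr \<epsilon> = x powr \<epsilon>" using s assms by (simp add: powr_mult[symmetric])
  also have "x powr (-\<alpha>-\<epsilon>) * x powr \<alpha> = x powr (-\<epsilon>)" by (simp add: powr_add[symmetric])
  also have "L * x powr \<epsilon> * x powr (-\<epsilon>) = L" using assms by (simp add: powr_minus)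
  finally have eq: "L * \<sigma> powr \<epsilon> * x powr (-\<alpha>-\<epsilon>) * P = L" .
  have "k * P \<le> L" using assms(3) m by (simp add: P_def mult.assoc)
  then have "k * P \<le> L * \<sigma> powr \<epsilon> * x powr (-\<alpha>-\<epsilon>) * P" using eq by linarith
  then show ?thesis using P by simp
qed

lemma bnd_large:
  fixes x \<sigma> :: real
  assumes "0 < \<sigma>" "\<sigma> \<le> x" "k * x powr \<alpha> * min (x/\<sigma>) (\<sigma>/x) powr \<epsilon> \<le> L"
  shows "k \<le> L * \<sigma> powr (-\<epsilon>) * x powr (\<epsilon>-\<alpha>)"
proof -
  have s: "x > 0" using assms by simp
  have m: "min (x/\<sigma>) (\<sigma>/x) = \<sigma>/x"
  proof -
    have "\<sigma>/x \<le> 1" using assms s by simp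
    moreover have "1 \<le> x/\<sigma>" using assms by simp
    ultimately show ?thesis by simp
  qed
  define P where "P = x powr \<alpha> * (\<sigma>/x) powr \<epsilon>"
  have P: "P > 0" using assms s by (simp add: P_def)
  have "L * \<sigma> powr (-\<epsilon>) * x powr (\<epsilon>-\<alpha>) * P = L * (\<sigma> powr (-\<epsilon>) * (\<sigma>/x) powr \<epsilon>) * (x powr (\<epsilon>-\<alpha>) * x powr \<alpha>)"
    by (simp add: P_def)
  also have "\<sigma> powr (-\<epsilon>) * (\<sigma>/x) powr \<epsilon> = x powr (-\<epsilon>)" using s assms
    by (simp add: powr_divide powr_minus field_simps)
  also have "x powr (\<epsilon>-\<alpha>) * x powr \<alpha> = x powr \<epsilon>" by (simp add: powr_add[symmetric])
  also have "L * x powr (-\<epsilon>) * x powr \<epsilon> = L" using s by (simp add: powr_minus)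
  finally have eq: "L * \<sigma> powr (-\<epsilon>) * x powr (\<epsilon>-\<alpha>) * P = L" .
  have "k * P \<le> L" using assms(3) m by (simp add: P_def mult.assoc)
  then have "k * P \<le> L * \<sigma> powr (-\<epsilon>) * x powr (\<epsilon>-\<alpha>) * P" using eq by linarith
  then show ?thesis using P by simp
qed



lemma core:
  fixes J :: "'j set" and r :: "'j \<Rightarrow> real"
  assumes fin: "finite J" and pos: "\<forall>j\<in>J. r j > 0" and sig: "\<sigma> > 0"
    and e: "0 < \<epsilon>" "\<epsilon> < \<alpha>0 - \<alpha>" "\<epsilon> < \<alpha> - \<alpha>1" and al: "\<alpha> > 0" and L: "L \<ge> 0"
    and hyp: "\<And>x. 0 < x \<Longrightarrow> real (card {j\<in>J. x \<le> r j}) * x powr \<alpha> * min (x/\<sigma>) (\<sigma>/x) powr \<epsilon> \<le> L"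
  shows "(\<Sum>j\<in>{j\<in>J. r j < \<sigma>}. r j powr \<alpha>0) * \<sigma> powr (\<alpha>-\<alpha>0)
       + (\<Sum>j\<in>{j\<in>J. \<sigma> \<le> r j}. r j powr \<alpha>1) * \<sigma> powr (\<alpha>-\<alpha>1)
       \<le> (\<alpha>0/(\<alpha>0-\<alpha>-\<epsilon>) + (1 + max \<alpha>1 0/(\<alpha>-\<alpha>1-\<epsilon>))) * L"
proof -
  have sA: "(\<Sum>j\<in>{j\<in>J. r j < \<sigma>}. r j powr \<alpha>0) \<le> \<alpha>0 / (\<alpha>0-\<alpha>-\<epsilon>) * L * \<sigma> powr (\<alpha>0 - \<alpha>)"
    by (rule partA[OF fin pos sig e(1,2) al L]) (rule bnd_small, auto intro: hyp)
  have sB: "(\<Sum>j\<in>{j\<in>J. \<sigma> \<le> r j}. r j powr \<alpha>1) \<le> (1 + max \<alpha>1 0 / (\<alpha> - \<alpha>1 - \<epsilon>)) * L * \<sigma> powr (\<alpha>1 - \<alpha>)"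
  proof (rule partB[OF fin sig e(1,3) L])
    fix x assume x: "\<sigma> \<le> x"
    then have "0 < x" using sig by linarith
    then show "real (card {j\<in>J. x \<le> r j}) \<le> L * \<sigma> powr (-\<epsilon>) * x powr (\<epsilon>-\<alpha>)"
      by (intro bnd_large[OF sig x] hyp)
  qed
  have pA: "0 \<le> \<sigma> powr (\<alpha>-\<alpha>0)" and pB: "0 \<le> \<sigma> powr (\<alpha>-\<alpha>1)" by auto
  have "(\<Sum>j\<in>{j\<in>J. r j < \<sigma>}. r j powr \<alpha>0) * \<sigma> powr (\<alpha>-\<alpha>0) \<le> \<alpha>0 / (\<alpha>0-\<alpha>-\<epsilon>) * L * (\<sigma> powr (\<alpha>0 - \<alpha>) * \<sigma> powr (\<alpha>-\<alpha>0))"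
    using mult_right_mono[OF sA pA] by (simp add: mult.assoc)
  also have "\<sigma> powr (\<alpha>0 - \<alpha>) * \<sigma> powr (\<alpha>-\<alpha>0) = 1" using sig by (simp add: powr_add[symmetric])
  finally have 1: "(\<Sum>j\<in>{j\<in>J. r j < \<sigma>}. r j powr \<alpha>0) * \<sigma> powr (\<alpha>-\<alpha>0) \<le> \<alpha>0 / (\<alpha>0-\<alpha>-\<epsilon>) * L" by simp
  have "(\<Sum>j\<in>{j\<in>J. \<sigma> \<le> r j}. r j powr \<alpha>1) * \<sigma> powr (\<alpha>-\<alpha>1) \<le> (1 + max \<alpha>1 0 / (\<alpha> - \<alpha>1 - \<epsilon>)) * L * (\<sigma> powr (\<alpha>1 - \<alpha>) * \<sigma> powr (\<alpha>-\<alpha>1))"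
    using mult_right_mono[OF sB pB] by (simp add: mult.assoc)
  also have "\<sigma> powr (\<alpha>1 - \<alpha>) * \<sigma> powr (\<alpha>-\<alpha>1) = 1" using sig by (simp add: powr_add[symmetric])
  finally have 2: "(\<Sum>j\<in>{j\<in>J. \<sigma> \<le> r j}. r j powr \<alpha>1) * \<sigma> powr (\<alpha>-\<alpha>1) \<le> (1 + max \<alpha>1 0 / (\<alpha> - \<alpha>1 - \<epsilon>)) * L" by simp
  show ?thesis using 1 2 by (simp add: distrib_right)
qed

lemma min_half:
  fixes a b c d :: real assumes "a/2 \<le> c" "b \<le> d" "0 \<le> b"
  shows "min a b / 2 \<le> min c d"
proof -
  have "min a b \<le> a" "min a b \<le> b" by simp_all
  then show ?thesis using assms by (intro min.boundedI) linarith+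
qed

lemma averaging:
  fixes J :: "'j set" and r :: "'j \<Rightarrow> real"
  assumes fin: "finite J" and sig: "\<sigma> > 0" and x: "x > 0"
    and e: "0 < \<epsilon>" and al: "\<alpha> > 0" and g: "\<gamma> > 0"
  shows "ennreal ((real (card {j\<in>J. x \<le> r j}) * x powr \<alpha> * min (x/\<sigma>) (\<sigma>/x) powr \<epsilon>) powr \<gamma>)
     \<le> ennreal (2 powr (\<epsilon>*\<gamma> + \<alpha>*\<gamma> + 1)) *
        (\<integral>\<^sup>+u. ennreal (indicator {0<..} u * (min (u/\<sigma>) (\<sigma>/u) powr (\<epsilon>*\<gamma>) *
              (real (card {j\<in>J. u \<le> r j}) * u powr \<alpha>) powr \<gamma> / u)) \<partial>lborel)"
proof -
  define mn where "mn = min (x/\<sigma>) (\<sigma>/x)"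
  have mn: "mn > 0" using sig x by (simp add: mn_def)
  define Hx where "Hx = real (card {j\<in>J. x \<le> r j}) * x powr \<alpha>"
  have Hx: "Hx \<ge> 0" by (simp add: Hx_def)
  define LHS where "LHS = (Hx * mn powr \<epsilon>) powr \<gamma>"
  have LHS: "LHS \<ge> 0" by (simp add: LHS_def)
  have LHS2: "LHS = Hx powr \<gamma> * mn powr (\<epsilon>*\<gamma>)"
    using Hx mn by (simp add: LHS_def powr_mult powr_powr)
  define c0 where "c0 = 2 powr (-(\<epsilon>*\<gamma>) - \<alpha>*\<gamma>) * LHS / x"
  have c0: "c0 \<ge> 0" using LHS x by (simp add: c0_def)
  have pt: "ennreal (c0 * indicator {x/2..x} u) \<le> ennreal (indicator {0<..} u * (min (u/\<sigma>) (\<sigma>/u) powr (\<epsilon>*\<gamma>) *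
              (real (card {j\<in>J. u \<le> r j}) * u powr \<alpha>) powr \<gamma> / u))" for u
  proof (cases "u \<in> {x/2..x}")
    case True
    then have u: "u > 0" "x/2 \<le> u" "u \<le> x" using x by auto
    have m1: "mn / 2 \<le> min (u/\<sigma>) (\<sigma>/u)"
    proof -
      have f1: "x/\<sigma>/2 \<le> u/\<sigma>" using u sig by (simp add: field_simps)
      have f2: "\<sigma>/x \<le> \<sigma>/u" using u sig by (simp add: frac_le)
      have f3: "0 \<le> \<sigma>/x" using sig x by simp
      show ?thesis unfolding mn_def by (rule min_half[OF f1 f2 f3])
    qed
    have k1: "2 powr (-(\<epsilon>*\<gamma>)) * mn powr (\<epsilon>*\<gamma>) \<le> min (u/\<sigma>) (\<sigma>/u) powr (\<epsilon>*\<gamma>)"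
    proof -
      have "2 powr (-(\<epsilon>*\<gamma>)) * mn powr (\<epsilon>*\<gamma>) = (mn/2) powr (\<epsilon>*\<gamma>)"
        using mn by (simp add: powr_divide powr_minus_divide)
      also have "\<dots> \<le> min (u/\<sigma>) (\<sigma>/u) powr (\<epsilon>*\<gamma>)"
        using m1 mn e g by (intro powr_mono2) auto
      finally show ?thesis .
    qed
    have h1: "2 powr (-(\<alpha>*\<gamma>)) * Hx powr \<gamma> \<le> (real (card {j\<in>J. u \<le> r j}) * u powr \<alpha>) powr \<gamma>"
    proof -
      have "real (card {j\<in>J. x \<le> r j}) \<le> real (card {j\<in>J. u \<le> r j})"
        using card_mono_x[OF fin u(3)] by simp
      moreover have "(x/2) powr \<alpha> \<le> u powr \<alpha>" using u x al by (intro powr_mono2) auto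
      ultimately have "real (card {j\<in>J. x \<le> r j}) * (x/2) powr \<alpha> \<le> real (card {j\<in>J. u \<le> r j}) * u powr \<alpha>"
        by (intro mult_mono) auto
      moreover have "real (card {j\<in>J. x \<le> r j}) * (x/2) powr \<alpha> = 2 powr (-\<alpha>) * Hx"
        using x by (simp add: Hx_def powr_divide powr_minus_divide)
      ultimately have "2 powr (-\<alpha>) * Hx \<le> real (card {j\<in>J. u \<le> r j}) * u powr \<alpha>" by simp
      then have "(2 powr (-\<alpha>) * Hx) powr \<gamma> \<le> (real (card {j\<in>J. u \<le> r j}) * u powr \<alpha>) powr \<gamma>"
        using Hx g by (intro powr_mono2) auto
      moreover have "(2 powr (-\<alpha>) * Hx) powr \<gamma> = 2 powr (-(\<alpha>*\<gamma>)) * Hx powr \<gamma>"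
        using Hx by (simp add: powr_mult powr_powr)
      ultimately show ?thesis by simp
    qed
    have i1: "1/x \<le> 1/u" using u by (simp add: frac_le)
    have p2: "2 powr (-(\<epsilon>*\<gamma>) - \<alpha>*\<gamma>) = 2 powr (-(\<epsilon>*\<gamma>)) * 2 powr (-(\<alpha>*\<gamma>))"
      by (simp add: powr_add[symmetric])
    have "c0 = (2 powr (-(\<epsilon>*\<gamma>)) * mn powr (\<epsilon>*\<gamma>)) * (2 powr (-(\<alpha>*\<gamma>)) * Hx powr \<gamma>) * (1/x)"
      unfolding c0_def LHS2 p2 by simp
    also have "\<dots> \<le> min (u/\<sigma>) (\<sigma>/u) powr (\<epsilon>*\<gamma>) * (real (card {j\<in>J. u \<le> r j}) * u powr \<alpha>) powr \<gamma> * (1/u)"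
      by (intro mult_mono k1 h1 i1) (use u in auto)
    finally show ?thesis using True u by (intro ennreal_leI) (simp add: indicator_def)
  next
    case False
    then show ?thesis by simp
  qed
  have "ennreal (c0 * (x/2)) = (\<integral>\<^sup>+u. ennreal (c0 * indicator {x/2..x} u) \<partial>lborel)"
  proof -
    have "(\<integral>\<^sup>+u. ennreal (c0 * indicator {x/2..x} u) \<partial>lborel) = (\<integral>\<^sup>+u. ennreal c0 * indicator {x/2..x} u \<partial>lborel)"
      using c0 by (intro nn_integral_cong) (simp add: indicator_def)
    also have "\<dots> = ennreal c0 * emeasure lborel {x/2..x}" by (simp add: nn_integral_cmult_indicator)
    also have "\<dots> = ennreal (c0 * (x/2))" using x c0 by (simp add: ennreal_mult[symmetric])
    finally show ?thesis by simp
  qed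
  also have "\<dots> \<le> (\<integral>\<^sup>+u. ennreal (indicator {0<..} u * (min (u/\<sigma>) (\<sigma>/u) powr (\<epsilon>*\<gamma>) *
              (real (card {j\<in>J. u \<le> r j}) * u powr \<alpha>) powr \<gamma> / u)) \<partial>lborel)"
    by (intro nn_integral_mono pt)
  finally have *: "ennreal (c0 * (x/2)) \<le> \<dots>" .
  have p3: "2 powr (\<epsilon>*\<gamma> + \<alpha>*\<gamma> + 1) * 2 powr (-(\<epsilon>*\<gamma>) - \<alpha>*\<gamma>) = 2"
  proof -
    have "2 powr (\<epsilon>*\<gamma> + \<alpha>*\<gamma> + 1) * 2 powr (-(\<epsilon>*\<gamma>) - \<alpha>*\<gamma>) = (2::real) powr ((\<epsilon>*\<gamma> + \<alpha>*\<gamma> + 1) + (-(\<epsilon>*\<gamma>) - \<alpha>*\<gamma>))"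
      by (rule powr_add[symmetric])
    also have "(\<epsilon>*\<gamma> + \<alpha>*\<gamma> + 1) + (-(\<epsilon>*\<gamma>) - \<alpha>*\<gamma>) = 1" by simp
    finally show ?thesis by simp
  qed
  have "2 powr (\<epsilon>*\<gamma> + \<alpha>*\<gamma> + 1) * (c0 * (x/2)) = (2 powr (\<epsilon>*\<gamma> + \<alpha>*\<gamma> + 1) * 2 powr (-(\<epsilon>*\<gamma>) - \<alpha>*\<gamma>)) * LHS * (x / x) / 2"
    unfolding c0_def by (simp add: field_simps)
  also have "\<dots> = LHS" using x by (simp only: p3) simp
  finally have eqL: "LHS = 2 powr (\<epsilon>*\<gamma> + \<alpha>*\<gamma> + 1) * (c0 * (x/2))" by simp
  have "ennreal LHS = ennreal (2 powr (\<epsilon>*\<gamma> + \<alpha>*\<gamma> + 1)) * ennreal (c0 * (x/2))"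
    apply (subst eqL) using c0 x by (intro ennreal_mult) auto
  also have "\<dots> \<le> ennreal (2 powr (\<epsilon>*\<gamma> + \<alpha>*\<gamma> + 1)) * (\<integral>\<^sup>+u. ennreal (indicator {0<..} u * (min (u/\<sigma>) (\<sigma>/u) powr (\<epsilon>*\<gamma>) *
              (real (card {j\<in>J. u \<le> r j}) * u powr \<alpha>) powr \<gamma> / u)) \<partial>lborel)"
    by (intro mult_left_mono *) auto
  finally show ?thesis by (simp add: LHS_def Hx_def mn_def)
qed



lemma kernel_int:
  fixes c e u :: real
  assumes c: "c > 0" and e: "e > 0" and u: "u > 0"
  shows "(\<integral>\<^sup>+t. ennreal (indicator {0<..} t * (min (u / t powr c) (t powr c / u) powr e / t)) \<partial>lborel)
         \<le> ennreal (2 / (c * e))"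
proof -
  define T where "T = u powr (1/c)"
  have T: "T > 0" using u by (simp add: T_def)
  have Tc: "T powr c = u" using u c by (simp add: T_def powr_powr)
  have Tce: "T powr (c*e) = u powr e" using Tc by (simp add: powr_powr[symmetric])
  have ce: "c * e > 0" using c e by simp
  have pt: "ennreal (indicator {0<..} t * (min (u / t powr c) (t powr c / u) powr e / t))
      \<le> ennreal (u powr (-e)) * ennreal (indicator {0..T} t * t powr (c*e - 1))
        + ennreal (u powr e) * ennreal (indicator {T..} t * t powr (-(c*e) - 1))" for t
  proof (cases "t > 0")
    case False
    then show ?thesis by (simp add: indicator_def)
  next
    case True
    show ?thesis
    proof (cases "t \<le> T")
      case tT: True
      have "t powr c \<le> T powr c" using tT True c by (intro powr_mono2) auto
      then have le: "t powr c \<le> u" using Tc by simp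
      have "min (u / t powr c) (t powr c / u) = t powr c / u"
      proof -
        have "t powr c / u \<le> 1" using le u by simp
        moreover have "1 \<le> u / t powr c" using le True by simp
        ultimately show ?thesis by simp
      qed
      then have "indicator {0<..} t * (min (u / t powr c) (t powr c / u) powr e / t)
            = (t powr c / u) powr e / t" using True by simp
      also have "\<dots> = u powr (-e) * (t powr (c*e) * t powr (-1))"
        using True u by (simp add: powr_divide powr_powr powr_minus_divide)
      also have "t powr (c*e) * t powr (-1) = t powr (c*e - 1)"
        by (subst powr_add[symmetric]) simp
      finally have eq: "indicator {0<..} t * (min (u / t powr c) (t powr c / u) powr e / t)
            = u powr (-e) * (indicator {0..T} t * t powr (c*e - 1))"
        using True tT by simp
      show ?thesis unfolding eq
        by (rule order_trans[OF _ add_increasing2]) (auto simp: ennreal_mult[symmetric])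
    next
      case tT: False
      have "T powr c \<le> t powr c" using tT T c by (intro powr_mono2) auto
      then have le: "u \<le> t powr c" using Tc by simp
      have "min (u / t powr c) (t powr c / u) = u / t powr c"
      proof -
        have "u / t powr c \<le> 1" using le u True by (simp add: divide_le_eq_1)
        moreover have "1 \<le> t powr c / u" using le u by simp
        ultimately show ?thesis by simp
      qed
      then have "indicator {0<..} t * (min (u / t powr c) (t powr c / u) powr e / t)
            = (u / t powr c) powr e / t" using True by simp
      also have "\<dots> = u powr e * (t powr (-(c*e)) * t powr (-1))"
        using True u by (simp add: powr_divide powr_powr powr_minus_divide)
      also have "t powr (-(c*e)) * t powr (-1) = t powr (-(c*e) - 1)"
        by (subst powr_add[symmetric]) simp
      finally have eq: "indicator {0<..} t * (min (u / t powr c) (t powr c / u) powr e / t)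
            = u powr e * (indicator {T..} t * t powr (-(c*e) - 1))"
        using True tT by simp
      show ?thesis unfolding eq
        by (rule order_trans[OF _ add_increasing]) (auto simp: ennreal_mult[symmetric])
    qed
  qed
  have "(\<integral>\<^sup>+t. ennreal (indicator {0<..} t * (min (u / t powr c) (t powr c / u) powr e / t)) \<partial>lborel)
     \<le> (\<integral>\<^sup>+t. ennreal (u powr (-e)) * ennreal (indicator {0..T} t * t powr (c*e - 1))
        + ennreal (u powr e) * ennreal (indicator {T..} t * t powr (-(c*e) - 1)) \<partial>lborel)"
    by (intro nn_integral_mono pt)
  also have "\<dots> = ennreal (u powr (-e)) * (\<integral>\<^sup>+t. ennreal (indicator {0..T} t * t powr (c*e - 1)) \<partial>lborel)
      + ennreal (u powr e) * (\<integral>\<^sup>+t. ennreal (indicator {T..} t * t powr (-(c*e) - 1)) \<partial>lborel)"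
    by (subst nn_integral_add) (auto simp: nn_integral_cmult)
  also have "\<dots> = ennreal (u powr (-e)) * ennreal (T powr (c*e) / (c*e)) + ennreal (u powr e) * ennreal (T powr (-(c*e)) / (c*e))"
    using ce T by (simp add: pow_int0 pow_int_inf)
  also have "\<dots> = ennreal (1/(c*e)) + ennreal (1/(c*e))"
  proof -
    have "u powr (-e) * (T powr (c*e) / (c*e)) = 1/(c*e)" using u by (simp add: Tce powr_minus_divide)
    moreover have "u powr e * (T powr (-(c*e)) / (c*e)) = 1/(c*e)" using u by (simp add: Tce powr_minus_divide)
    ultimately show ?thesis
      using ce by (subst (1 2) ennreal_mult[symmetric]) (auto simp del: ennreal_plus)
  qed
  also have "\<dots> = ennreal (2/(c*e))" using ce by (simp add: ennreal_plus[symmetric])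
  finally show ?thesis .
qed



lemma pointwise_G:
  fixes J :: "'j set" and r :: "'j \<Rightarrow> real"
  assumes fin: "finite J" and pos: "\<forall>j\<in>J. r j > 0" and sig: "\<sigma> > 0"
    and e: "0 < \<epsilon>" "\<epsilon> < \<alpha>0 - \<alpha>" "\<epsilon> < \<alpha> - \<alpha>1" and al: "\<alpha> > 0" and g: "\<gamma> > 0"
  shows "ennreal (((\<Sum>j\<in>{j\<in>J. r j < \<sigma>}. r j powr \<alpha>0) * \<sigma> powr (\<alpha>-\<alpha>0)
       + (\<Sum>j\<in>{j\<in>J. \<sigma> \<le> r j}. r j powr \<alpha>1) * \<sigma> powr (\<alpha>-\<alpha>1)) powr \<gamma>)
    \<le> ennreal ((\<alpha>0/(\<alpha>0-\<alpha>-\<epsilon>) + (1 + max \<alpha>1 0/(\<alpha>-\<alpha>1-\<epsilon>))) powr \<gamma> * 2 powr (\<epsilon>*\<gamma> + \<alpha>*\<gamma> + 1)) *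
        (\<integral>\<^sup>+u. ennreal (indicator {0<..} u * (min (u/\<sigma>) (\<sigma>/u) powr (\<epsilon>*\<gamma>) *
              (real (card {j\<in>J. u \<le> r j}) * u powr \<alpha>) powr \<gamma> / u)) \<partial>lborel)"
    (is "ennreal (?G powr \<gamma>) \<le> ennreal (?K powr \<gamma> * ?c2) * ?M")
proof (cases "?M = \<infinity>")
  case True
  have "?K > 0"
  proof -
    have "\<alpha>0/(\<alpha>0-\<alpha>-\<epsilon>) > 0" using e al by simp
    moreover have "max \<alpha>1 0/(\<alpha>-\<alpha>1-\<epsilon>) \<ge> 0" using e by simp
    ultimately show ?thesis by linarith
  qed
  then have "?K powr \<gamma> * ?c2 > 0" by simp
  then have pz: "0 < ennreal (?K powr \<gamma> * ?c2)" by (simp only: ennreal_less_zero_iff)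
  have "ennreal (?K powr \<gamma> * ?c2) \<noteq> 0"
  proof
    assume "ennreal (?K powr \<gamma> * ?c2) = 0"
    with pz show False by (simp only: less_irrefl)
  qed
  then have "ennreal (?K powr \<gamma> * ?c2) * ?M = top" unfolding True infinity_ennreal_def
    by (rule ennreal_top_mult_left)
  then show ?thesis by (simp only:) (rule top_greatest)
next
  case False
  then obtain Mr where Mr: "?M = ennreal Mr" "Mr \<ge> 0"
    by (cases "?M" rule: ennreal_cases) (auto simp: infinity_ennreal_def)
  have c2: "?c2 > 0" by simp
  define L where "L = (?c2 * Mr) powr (1/\<gamma>)"
  have L: "L \<ge> 0" by (simp add: L_def)
  have Kp: "?K \<ge> 0"
  proof -
    have "\<alpha>0/(\<alpha>0-\<alpha>-\<epsilon>) > 0" using e al by simp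
    moreover have "max \<alpha>1 0/(\<alpha>-\<alpha>1-\<epsilon>) \<ge> 0" using e by simp
    ultimately show ?thesis by linarith
  qed
  have hyp: "real (card {j\<in>J. x \<le> r j}) * x powr \<alpha> * min (x/\<sigma>) (\<sigma>/x) powr \<epsilon> \<le> L" if x: "0 < x" for x
  proof -
    define Q where "Q = real (card {j\<in>J. x \<le> r j}) * x powr \<alpha> * min (x/\<sigma>) (\<sigma>/x) powr \<epsilon>"
    have Q: "Q \<ge> 0" by (simp add: Q_def)
    have "ennreal (Q powr \<gamma>) \<le> ennreal ?c2 * ?M"
      unfolding Q_def by (rule averaging[OF fin sig x e(1) al g])
    also have "\<dots> = ennreal (?c2 * Mr)" using Mr by (simp add: ennreal_mult)
    finally have "Q powr \<gamma> \<le> ?c2 * Mr" using Mr by (subst (asm) ennreal_le_iff) auto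
    then have "(Q powr \<gamma>) powr (1/\<gamma>) \<le> (?c2 * Mr) powr (1/\<gamma>)"
      using g by (intro powr_mono2) auto
    then show ?thesis using Q g by (simp add: powr_powr L_def Q_def[symmetric])
  qed
  have Gle: "?G \<le> ?K * L"
    by (rule core[OF fin pos sig e al L hyp])
  have G0: "?G \<ge> 0" by (intro add_nonneg_nonneg mult_nonneg_nonneg sum_nonneg) auto
  have "?G powr \<gamma> \<le> (?K * L) powr \<gamma>" using Gle G0 g by (intro powr_mono2) auto
  also have "\<dots> = ?K powr \<gamma> * L powr \<gamma>" using Kp L by (simp add: powr_mult)
  also have "L powr \<gamma> = ?c2 * Mr" using g Mr by (simp add: L_def powr_powr)
  finally have "?G powr \<gamma> \<le> ?K powr \<gamma> * (?c2 * Mr)" .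
  then have "ennreal (?G powr \<gamma>) \<le> ennreal (?K powr \<gamma> * ?c2 * Mr)" by (simp add: mult.assoc ennreal_leI)
  also have "\<dots> = ennreal (?K powr \<gamma> * ?c2) * ?M" using Mr by (simp add: ennreal_mult)
  finally show ?thesis .
qed


lemma integral_bound:
  fixes J :: "'j set" and r :: "'j \<Rightarrow> real"
  assumes fin: "finite J" and pos: "\<forall>j\<in>J. r j > 0"
    and e: "0 < \<epsilon>" "\<epsilon> < \<alpha>0 - \<alpha>" "\<epsilon> < \<alpha> - \<alpha>1" and al: "\<alpha> > 0" and g: "\<gamma> > 0" and c: "c > 0" and k: "k \<ge> 0"
  defines "Kc \<equiv> (\<alpha>0/(\<alpha>0-\<alpha>-\<epsilon>) + (1 + max \<alpha>1 0/(\<alpha>-\<alpha>1-\<epsilon>))) powr \<gamma> * 2 powr (\<epsilon>*\<gamma> + \<alpha>*\<gamma> + 1)"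
  shows "(\<integral>\<^sup>+t. ennreal (k * (indicator {0<..} t * ((
            (\<Sum>j\<in>{j\<in>J. r j < t powr c}. r j powr \<alpha>0) * (t powr c) powr (\<alpha>-\<alpha>0)
          + (\<Sum>j\<in>{j\<in>J. t powr c \<le> r j}. r j powr \<alpha>1) * (t powr c) powr (\<alpha>-\<alpha>1)) powr \<gamma> / t))) \<partial>lborel)
     \<le> ennreal (k*Kc * (2/(c*(\<epsilon>*\<gamma>)))) *
       (\<integral>\<^sup>+u. ennreal (indicator {0<..} u * ((real (card {j\<in>J. u \<le> r j}) * u powr \<alpha>) powr \<gamma> / u)) \<partial>lborel)"
proof -
  note card_measurable[OF fin, measurable]
  define F where "F = (\<lambda>t u. ennreal (indicator {0<..} u * (min (u/(t powr c)) ((t powr c)/u) powr (\<epsilon>*\<gamma>) *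
              (real (card {j\<in>J. u \<le> r j}) * u powr \<alpha>) powr \<gamma> / u)))"
  define Gs where "Gs = (\<lambda>t::real. (\<Sum>j\<in>{j\<in>J. r j < t powr c}. r j powr \<alpha>0) * (t powr c) powr (\<alpha>-\<alpha>0)
          + (\<Sum>j\<in>{j\<in>J. t powr c \<le> r j}. r j powr \<alpha>1) * (t powr c) powr (\<alpha>-\<alpha>1))"
  have Fm: "(\<lambda>u. F t u) \<in> borel_measurable lborel" for t
    unfolding F_def by measurable
  have Fm2: "(\<lambda>(u, t). ennreal (k*Kc) * (ennreal (indicator {0<..} t / t) * F t u)) \<in> borel_measurable (lborel \<Otimes>\<^sub>M lborel)"
    unfolding F_def by measurable
  have Kc0: "k*Kc \<ge> 0" using k by (simp add: Kc_def)
  have Kcnn: "Kc \<ge> 0" by (simp add: Kc_def)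
  have "(\<integral>\<^sup>+t. ennreal (k * (indicator {0<..} t * (Gs t powr \<gamma> / t))) \<partial>lborel)
      \<le> (\<integral>\<^sup>+t. ennreal (k*Kc) * (ennreal (indicator {0<..} t / t) * (\<integral>\<^sup>+u. F t u \<partial>lborel)) \<partial>lborel)"
  proof (rule nn_integral_mono)
    fix t :: real
    show "ennreal (k * (indicator {0<..} t * (Gs t powr \<gamma> / t))) \<le> ennreal (k*Kc) * (ennreal (indicator {0<..} t / t) * (\<integral>\<^sup>+u. F t u \<partial>lborel))"
    proof (cases "t > 0")
      case False then show ?thesis by (simp add: indicator_def)
    next
      case True
      have sp: "t powr c > 0" using True by simp
      have "ennreal (k * (indicator {0<..} t * (Gs t powr \<gamma> / t))) = ennreal k * (ennreal (1/t) * ennreal (Gs t powr \<gamma>))"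
        using True k by (simp add: ennreal_mult[symmetric] indicator_def)
      also have "\<dots> \<le> ennreal k * (ennreal (1/t) * (ennreal Kc * (\<integral>\<^sup>+u. F t u \<partial>lborel)))"
        unfolding Gs_def F_def Kc_def
        by (intro mult_left_mono pointwise_G[OF fin pos sp e al g]) auto
      also have "\<dots> = ennreal (1/t) * (ennreal (k*Kc) * (\<integral>\<^sup>+u. F t u \<partial>lborel))"
        using k Kcnn by (simp add: ennreal_mult mult_ac)
      also have "\<dots> = ennreal (k*Kc) * (ennreal (indicator {0<..} t / t) * (\<integral>\<^sup>+u. F t u \<partial>lborel))"
        using True by (simp add: indicator_def mult_ac)
      finally show ?thesis .
    qed
  qed
  also have "\<dots> = (\<integral>\<^sup>+t. (\<integral>\<^sup>+u. ennreal (k*Kc) * (ennreal (indicator {0<..} t / t) * F t u) \<partial>lborel) \<partial>lborel)"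
  proof (intro nn_integral_cong)
    fix t :: real
    show "ennreal (k*Kc) * (ennreal (indicator {0<..} t / t) * (\<integral>\<^sup>+u. F t u \<partial>lborel))
       = (\<integral>\<^sup>+u. ennreal (k*Kc) * (ennreal (indicator {0<..} t / t) * F t u) \<partial>lborel)"
      using nn_integral_cmult[OF Fm[of t], of "ennreal (k*Kc) * ennreal (indicator {0<..} t / t)"]
      by (simp add: mult.assoc)
  qed
  also have "\<dots> = (\<integral>\<^sup>+u. (\<integral>\<^sup>+t. ennreal (k*Kc) * (ennreal (indicator {0<..} t / t) * F t u) \<partial>lborel) \<partial>lborel)"
    using lborel_pair.Fubini'[of "\<lambda>u t. ennreal (k*Kc) * (ennreal (indicator {0<..} t / t) * F t u)"] Fm2
    by simp
  also have "\<dots> \<le> (\<integral>\<^sup>+u. ennreal (k*Kc * (2/(c*(\<epsilon>*\<gamma>)))) * ennreal (indicator {0<..} u * ((real (card {j\<in>J. u \<le> r j}) * u powr \<alpha>) powr \<gamma> / u)) \<partial>lborel)"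
  proof (rule nn_integral_mono)
    fix u :: real
    show "(\<integral>\<^sup>+t. ennreal (k*Kc) * (ennreal (indicator {0<..} t / t) * F t u) \<partial>lborel)
        \<le> ennreal (k*Kc * (2/(c*(\<epsilon>*\<gamma>)))) * ennreal (indicator {0<..} u * ((real (card {j\<in>J. u \<le> r j}) * u powr \<alpha>) powr \<gamma> / u))"
    proof (cases "u > 0")
      case False then show ?thesis by (simp add: F_def indicator_def)
    next
      case True
      define Hu where "Hu = (real (card {j\<in>J. u \<le> r j}) * u powr \<alpha>) powr \<gamma> / u"
      have Hu: "Hu \<ge> 0" using True by (simp add: Hu_def)
      have "(\<integral>\<^sup>+t. ennreal (k*Kc) * (ennreal (indicator {0<..} t / t) * F t u) \<partial>lborel)
          = (\<integral>\<^sup>+t. ennreal (k*Kc * Hu) * ennreal (indicator {0<..} t * (min (u / t powr c) (t powr c / u) powr (\<epsilon>*\<gamma>) / t)) \<partial>lborel)"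
      proof (intro nn_integral_cong)
        fix t :: real
        show "ennreal (k*Kc) * (ennreal (indicator {0<..} t / t) * F t u) =
            ennreal (k*Kc * Hu) * ennreal (indicator {0<..} t * (min (u / t powr c) (t powr c / u) powr (\<epsilon>*\<gamma>) / t))"
          using True Kc0 Kcnn k Hu unfolding F_def Hu_def
          by (cases "t > 0") (simp_all add: indicator_def ennreal_mult[symmetric] field_simps)
      qed
      also have "\<dots> = ennreal (k*Kc * Hu) * (\<integral>\<^sup>+t. ennreal (indicator {0<..} t * (min (u / t powr c) (t powr c / u) powr (\<epsilon>*\<gamma>) / t)) \<partial>lborel)"
        by (rule nn_integral_cmult) measurable
      also have "\<dots> \<le> ennreal (k*Kc * Hu) * ennreal (2/(c*(\<epsilon>*\<gamma>)))"
        using c e g True by (intro mult_left_mono kernel_int) auto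
      also have "\<dots> = ennreal (k*Kc * (2/(c*(\<epsilon>*\<gamma>)))) * ennreal (indicator {0<..} u * Hu)"
        using True Kc0 Hu c e g by (simp add: ennreal_mult[symmetric] indicator_def mult_ac)
      finally show ?thesis by (simp add: Hu_def)
    qed
  qed
  also have "\<dots> = ennreal (k*Kc * (2/(c*(\<epsilon>*\<gamma>)))) * (\<integral>\<^sup>+u. ennreal (indicator {0<..} u * ((real (card {j\<in>J. u \<le> r j}) * u powr \<alpha>) powr \<gamma> / u)) \<partial>lborel)"
    by (rule nn_integral_cmult) measurable
  finally show ?thesis unfolding Gs_def .
qed



lemma pw_alg:
  fixes t K Cm S0 S1 p h \<beta> \<theta> \<alpha> \<alpha>0 \<alpha>1 c :: real
  assumes t: "t > 0" and K: "K \<ge> 0" and S0: "S0 \<ge> 0" and S1: "S1 \<ge> 0" and Cm: "Cm \<ge> 0"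
    and p: "p > 0" and h: "h > 0" and b: "\<beta> > 0"
    and Kle: "K \<le> Cm * S0 powr (1/p) + t * (Cm * S1 powr (1/p))"
    and ex0: "\<alpha> - \<alpha>0 = -\<theta>*\<beta>" and ex1: "\<alpha> - \<alpha>1 = (1-\<theta>)*\<beta>" and c: "c = p/\<beta>"
  shows "(t powr (-\<theta>) * K) powr h / t
     \<le> (2*Cm) powr h * ((S0 * (t powr c) powr (\<alpha>-\<alpha>0) + S1 * (t powr c) powr (\<alpha>-\<alpha>1)) powr (h/p) / t)"
proof -
  define x0 where "x0 = S0 * (t powr c) powr (\<alpha>-\<alpha>0)"
  define x1 where "x1 = S1 * (t powr c) powr (\<alpha>-\<alpha>1)"
  have x0: "x0 \<ge> 0" and x1: "x1 \<ge> 0" using S0 S1 by (auto simp: x0_def x1_def)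
  have e0: "c * (\<alpha>-\<alpha>0) = -\<theta> * p" using b by (simp add: c ex0)
  have e1: "c * (\<alpha>-\<alpha>1) = (1-\<theta>) * p" using b by (simp add: c ex1)
  have r0: "x0 powr (1/p) = S0 powr (1/p) * t powr (-\<theta>)"
  proof -
    have "x0 = S0 * t powr (-\<theta> * p)" by (simp add: x0_def powr_powr e0)
    then have "x0 powr (1/p) = S0 powr (1/p) * (t powr (-\<theta> * p)) powr (1/p)"
      using S0 by (simp add: powr_mult)
    also have "(t powr (-\<theta> * p)) powr (1/p) = t powr (-\<theta>)" using p by (simp add: powr_powr)
    finally show ?thesis .
  qed
  have r1: "x1 powr (1/p) = S1 powr (1/p) * t powr (1-\<theta>)"
  proof -
    have "x1 = S1 * t powr ((1-\<theta>) * p)" by (simp add: x1_def powr_powr e1)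
    then have "x1 powr (1/p) = S1 powr (1/p) * (t powr ((1-\<theta>) * p)) powr (1/p)"
      using S1 by (simp add: powr_mult)
    also have "(t powr ((1-\<theta>) * p)) powr (1/p) = t powr (1-\<theta>)" using p by (simp add: powr_powr)
    finally show ?thesis .
  qed
  have tt: "t powr (-\<theta>) * t = t powr (1-\<theta>)"
  proof -
    have "t powr (-\<theta>) * t powr 1 = t powr (-\<theta> + 1)" by (rule powr_add[symmetric])
    then show ?thesis using t by simp
  qed
  have "t powr (-\<theta>) * K \<le> t powr (-\<theta>) * (Cm * S0 powr (1/p) + t * (Cm * S1 powr (1/p)))"
    using Kle by (simp add: mult_left_mono)
  also have "\<dots> = Cm * (S0 powr (1/p) * t powr (-\<theta>)) + Cm * (S1 powr (1/p) * (t powr (-\<theta>) * t))"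
    by (simp add: algebra_simps)
  also have "\<dots> = Cm * (x0 powr (1/p) + x1 powr (1/p))" unfolding tt r0 r1 by (simp add: algebra_simps)
  also have "\<dots> \<le> Cm * (2 * (x0 + x1) powr (1/p))"
  proof -
    have "x0 powr (1/p) \<le> (x0 + x1) powr (1/p)" using x0 x1 p by (intro powr_mono2) auto
    moreover have "x1 powr (1/p) \<le> (x0 + x1) powr (1/p)" using x0 x1 p by (intro powr_mono2) auto
    ultimately show ?thesis using Cm by (intro mult_left_mono) auto
  qed
  finally have le: "t powr (-\<theta>) * K \<le> 2 * Cm * (x0 + x1) powr (1/p)" by simp
  have "(t powr (-\<theta>) * K) powr h \<le> (2 * Cm * (x0 + x1) powr (1/p)) powr h"
    using le K h by (intro powr_mono2) auto
  also have "\<dots> = (2*Cm) powr h * (x0 + x1) powr (h/p)"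
    using Cm x0 x1 by (simp add: powr_mult powr_powr)
  finally have "(t powr (-\<theta>) * K) powr h \<le> (2*Cm) powr h * (x0 + x1) powr (h/p)" .
  then have "(t powr (-\<theta>) * K) powr h / t \<le> (2*Cm) powr h * (x0 + x1) powr (h/p) / t"
    using t by (simp add: divide_right_mono)
  then show ?thesis by (simp add: x0_def x1_def)
qed

lemma admissible_subset:
  assumes "admissible_balls B" "C \<subseteq> B"
  shows "admissible_balls C"
  unfolding admissible_balls_def
proof (intro conjI)
  show "finite C" using assms finite_subset unfolding admissible_balls_def by blast
  show "\<forall>(x, r)\<in>C. 0 < r \<and> r < 1" using assms unfolding admissible_balls_def by blast
  show "\<forall>(x, r)\<in>C. \<forall>(y, s)\<in>C. (x, r) \<noteq> (y, s) \<longrightarrow> ball x r \<inter> ball y s = {}"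
    using assms unfolding admissible_balls_def by blast
qed

lemma ball_sum_split:
  assumes "finite B"
  shows "ball_sum \<phi> B = (\<lambda>y. ball_sum \<phi> {j\<in>B. snd j < s} y + ball_sum \<phi> {j\<in>B. s \<le> snd j} y)"
proof
  fix y
  have "B = {j\<in>B. snd j < s} \<union> {j\<in>B. s \<le> snd j}" by auto
  moreover have "{j\<in>B. snd j < s} \<inter> {j\<in>B. s \<le> snd j} = {}" by auto
  ultimately show "ball_sum \<phi> B y = ball_sum \<phi> {j\<in>B. snd j < s} y + ball_sum \<phi> {j\<in>B. s \<le> snd j} y"
    unfolding ball_sum_def using assms
    by (metis (no_types, lifting) finite_Un sum.union_disjoint)
qed

lemma kfun_le:
  assumes b0: "banach_subspace X0 n0" and b1: "banach_subspace X1 n1"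
    and a0: "a0 \<in> X0" and a1: "a1 \<in> X1" and t: "t \<ge> 0"
  shows "Kfun X0 n0 X1 n1 t (a0 + a1) \<le> n0 a0 + t * n1 a1"
    and "0 \<le> Kfun X0 n0 X1 n1 t (a0 + a1)"
proof -
  define S where "S = {n0 b0 + t * n1 b1 | b0 b1. b0 \<in> X0 \<and> b1 \<in> X1 \<and> a0 + a1 = b0 + b1}"
  have nn: "\<forall>s\<in>S. 0 \<le> s"
  proof
    fix s assume "s \<in> S"
    then obtain b0 b1 where "s = n0 b0 + t * n1 b1" "b0 \<in> X0" "b1 \<in> X1" by (auto simp: S_def)
    moreover have "n0 b0 \<ge> 0" using b0 \<open>b0 \<in> X0\<close> by (simp add: banach_subspace_def)
    moreover have "n1 b1 \<ge> 0" using b1 \<open>b1 \<in> X1\<close> by (simp add: banach_subspace_def)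
    ultimately show "0 \<le> s" using t by simp
  qed
  have mem: "n0 a0 + t * n1 a1 \<in> S" using a0 a1 by (auto simp: S_def)
  have bdd: "bdd_below S" using nn by (auto intro: bdd_belowI)
  show "Kfun X0 n0 X1 n1 t (a0 + a1) \<le> n0 a0 + t * n1 a1"
    unfolding Kfun_def S_def[symmetric] by (rule cInf_lower[OF mem bdd])
  show "0 \<le> Kfun X0 n0 X1 n1 t (a0 + a1)"
    unfolding Kfun_def S_def[symmetric] using mem nn by (intro cInf_greatest) auto
qed



lemma rint_finite:
  fixes J :: "'j set" and r :: "'j \<Rightarrow> real"
  assumes fin: "finite J" and lt: "\<forall>j\<in>J. r j < 1" and al: "\<alpha> > 0" and g: "\<gamma> > 0"
  shows "(\<integral>\<^sup>+u. ennreal (indicator {0<..} u * ((real (card {j\<in>J. u \<le> r j}) * u powr \<alpha>) powr \<gamma> / u)) \<partial>lborel)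
     \<le> ennreal (real (card J) powr \<gamma> / (\<alpha>*\<gamma>))"
proof -
  have ag: "\<alpha>*\<gamma> > 0" using al g by simp
  have "(\<integral>\<^sup>+u. ennreal (indicator {0<..} u * ((real (card {j\<in>J. u \<le> r j}) * u powr \<alpha>) powr \<gamma> / u)) \<partial>lborel)
     \<le> (\<integral>\<^sup>+u. ennreal (real (card J) powr \<gamma>) * ennreal (indicator {0..1} u * u powr (\<alpha>*\<gamma> - 1)) \<partial>lborel)"
  proof (rule nn_integral_mono)
    fix u :: real
    have "indicator {0<..} u * ((real (card {j\<in>J. u \<le> r j}) * u powr \<alpha>) powr \<gamma> / u)
        \<le> real (card J) powr \<gamma> * (indicator {0..1} u * u powr (\<alpha>*\<gamma> - 1))"
    proof (cases "u > 0")
      case False then show ?thesis by (simp add: indicator_def)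
    next
      case True
      show ?thesis
      proof (cases "u < 1")
        case False
        then have "{j\<in>J. u \<le> r j} = {}" using lt by force
        then have z: "real (card {j\<in>J. u \<le> r j}) = 0" by (simp only: card.empty of_nat_0)
        show ?thesis unfolding z using True by (simp add: indicator_def)
      next
        case u1: True
        have "real (card {j\<in>J. u \<le> r j}) \<le> real (card J)" using fin by (simp add: card_mono)
        then have "real (card {j\<in>J. u \<le> r j}) * u powr \<alpha> \<le> real (card J) * u powr \<alpha>"
          by (simp add: mult_right_mono)
        then have "(real (card {j\<in>J. u \<le> r j}) * u powr \<alpha>) powr \<gamma> \<le> (real (card J) * u powr \<alpha>) powr \<gamma>"
          using g by (intro powr_mono2) auto
        also have "\<dots> = real (card J) powr \<gamma> * u powr (\<alpha>*\<gamma>)" by (simp add: powr_mult powr_powr)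
        finally have "(real (card {j\<in>J. u \<le> r j}) * u powr \<alpha>) powr \<gamma> / u \<le> real (card J) powr \<gamma> * u powr (\<alpha>*\<gamma>) / u"
          using True by (simp add: divide_right_mono)
        also have "real (card J) powr \<gamma> * u powr (\<alpha>*\<gamma>) / u = real (card J) powr \<gamma> * u powr (\<alpha>*\<gamma> - 1)"
          using True by (simp add: powr_diff)
        finally show ?thesis using True u1 by (simp add: indicator_def)
      qed
    qed
    then show "ennreal (indicator {0<..} u * ((real (card {j\<in>J. u \<le> r j}) * u powr \<alpha>) powr \<gamma> / u))
        \<le> ennreal (real (card J) powr \<gamma>) * ennreal (indicator {0..1} u * u powr (\<alpha>*\<gamma> - 1))"
      by (subst ennreal_mult[symmetric]) (auto intro: ennreal_leI)
  qed
  also have "\<dots> = ennreal (real (card J) powr \<gamma>) * ennreal (1 powr (\<alpha>*\<gamma>) / (\<alpha>*\<gamma>))"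
    by (subst nn_integral_cmult) (auto simp: pow_int0[OF ag])
  also have "\<dots> = ennreal (real (card J) powr \<gamma> / (\<alpha>*\<gamma>))"
    using ag by (subst ennreal_mult[symmetric]) auto
  finally show ?thesis .
qed



theorem lemma4p1:
  fixes X0 X1 :: "'v::real_vector set"
    and n0 n1 :: "'v \<Rightarrow> real"
    and emb :: "(real^'d \<Rightarrow> real) \<Rightarrow> 'v"
    and \<phi> :: "real^'d \<Rightarrow> real"
    and \<alpha>0 \<alpha>1 p \<theta> h :: real
  assumes compat: "compatible_banach X0 n0 X1 n1"
    and emb_add: "\<And>f g. emb (\<lambda>y. f y + g y) = emb f + emb g"
    and emb_scale: "\<And>c f. emb (\<lambda>y. c * f y) = c *\<^sub>R emb f"
    and a0: "\<alpha>0 > 0" and a01: "\<alpha>0 > \<alpha>1"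
    and p: "1 \<le> p"
    and th: "0 < \<theta>" "\<theta> < 1"
    and h: "h > 0"
    and hyp0: "\<exists>C. \<forall>\<B>. admissible_balls \<B> \<longrightarrow>
                 emb (ball_sum \<phi> \<B>) \<in> X0 \<and>
                 n0 (emb (ball_sum \<phi> \<B>)) \<le> C * (\<Sum>(x, r)\<in>\<B>. r powr \<alpha>0) powr (1 / p)"
    and hyp1: "\<exists>C. \<forall>\<B>. admissible_balls \<B> \<longrightarrow>
                 emb (ball_sum \<phi> \<B>) \<in> X1 \<and>
                 n1 (emb (ball_sum \<phi> \<B>)) \<le> C * (\<Sum>(x, r)\<in>\<B>. r powr \<alpha>1) powr (1 / p)"
    and ath: "(1 - \<theta>) * \<alpha>0 + \<theta> * \<alpha>1 > 0"
  shows "\<exists>C. \<forall>\<B>. admissible_balls \<B> \<longrightarrow>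
           interp_norm X0 n0 X1 n1 \<theta> h (emb (ball_sum \<phi> \<B>))
             \<le> ennreal (C * lorentz_norm ((1 - \<theta>) * \<alpha>0 + \<theta> * \<alpha>1)
                                   (h * ((1 - \<theta>) * \<alpha>0 + \<theta> * \<alpha>1) / p) \<B> snd
                          powr (((1 - \<theta>) * \<alpha>0 + \<theta> * \<alpha>1) / p))"
proof -
  obtain C0 where hC0: "\<forall>\<B>. admissible_balls \<B> \<longrightarrow> emb (ball_sum \<phi> \<B>) \<in> X0 \<and>
                 n0 (emb (ball_sum \<phi> \<B>)) \<le> C0 * (\<Sum>(x, r)\<in>\<B>. r powr \<alpha>0) powr (1 / p)"
    using hyp0 by blast
  obtain C1 where hC1: "\<forall>\<B>. admissible_balls \<B> \<longrightarrow> emb (ball_sum \<phi> \<B>) \<in> X1 \<and>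
                 n1 (emb (ball_sum \<phi> \<B>)) \<le> C1 * (\<Sum>(x, r)\<in>\<B>. r powr \<alpha>1) powr (1 / p)"
    using hyp1 by blast
  define Cm where "Cm = max (max C0 C1) 0"
  have Cm: "Cm \<ge> 0" "C0 \<le> Cm" "C1 \<le> Cm" by (auto simp: Cm_def)
  have b0: "banach_subspace X0 n0" and b1: "banach_subspace X1 n1"
    using compat unfolding compatible_banach_def by auto
  define \<alpha> where "\<alpha> = (1-\<theta>)*\<alpha>0 + \<theta>*\<alpha>1"
  define \<beta> where "\<beta> = \<alpha>0 - \<alpha>1"
  define \<gamma> where "\<gamma> = h/p"
  define c where "c = p/\<beta>"
  define \<epsilon> where "\<epsilon> = min (\<alpha>0-\<alpha>) (\<alpha>-\<alpha>1) / 2"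
  have pp: "p > 0" using p by simp
  have bt: "\<beta> > 0" using a01 by (simp add: \<beta>_def)
  have ex0: "\<alpha> - \<alpha>0 = -\<theta>*\<beta>" by (simp add: \<alpha>_def \<beta>_def algebra_simps)
  have ex1: "\<alpha> - \<alpha>1 = (1-\<theta>)*\<beta>" by (simp add: \<alpha>_def \<beta>_def algebra_simps)
  have "\<theta> * \<beta> > 0" using th bt by simp
  then have d0: "\<alpha>0 - \<alpha> > 0" using ex0 by linarith
  have "(1-\<theta>) * \<beta> > 0" using th bt by simp
  then have d1: "\<alpha> - \<alpha>1 > 0" using ex1 by linarith
  have ep: "0 < \<epsilon>" "\<epsilon> < \<alpha>0 - \<alpha>" "\<epsilon> < \<alpha> - \<alpha>1" using d0 d1 by (auto simp: \<epsilon>_def min_def)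
  have al: "\<alpha> > 0" using ath by (simp add: \<alpha>_def)
  have g: "\<gamma> > 0" using h pp by (simp add: \<gamma>_def)
  have cp: "c > 0" using pp bt by (simp add: c_def)
  define Kc where "Kc = (\<alpha>0/(\<alpha>0-\<alpha>-\<epsilon>) + (1 + max \<alpha>1 0/(\<alpha>-\<alpha>1-\<epsilon>))) powr \<gamma> * 2 powr (\<epsilon>*\<gamma> + \<alpha>*\<gamma> + 1)"
  define k where "k = (2*Cm) powr h"
  define Ctot where "Ctot = k*Kc*(2/(c*(\<epsilon>*\<gamma>)))"
  define q where "q = h*\<alpha>/p"
  have q: "q > 0" using h al pp by (simp add: q_def)
  have k: "k \<ge> 0" by (simp add: k_def)
  have Kc: "Kc \<ge> 0" by (simp add: Kc_def)
  have Ctot: "Ctot \<ge> 0" using k Kc cp ep g by (simp add: Ctot_def)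
  define C where "C = (Ctot / q) powr (1/h)"
  show ?thesis unfolding \<alpha>_def[symmetric]
  proof (intro exI[of _ C] allI impI)
    fix B :: "((real^'d) \<times> real) set" assume adm: "admissible_balls B"
    have fin: "finite B" and pos: "\<forall>j\<in>B. snd j > 0" and lt1: "\<forall>j\<in>B. snd j < 1"
      using adm by (auto simp: admissible_balls_def)
    define f where "f = emb (ball_sum \<phi> B)"
    define Rint where "Rint = (\<integral>\<^sup>+u. ennreal (indicator {0<..} u * ((real (card {j\<in>B. u \<le> snd j}) * u powr \<alpha>) powr \<gamma> / u)) \<partial>lborel)"
    have "Rint \<le> ennreal (real (card B) powr \<gamma> / (\<alpha>*\<gamma>))"
      unfolding Rint_def by (rule rint_finite[OF fin lt1 al g])
    then have "Rint < \<infinity>" using ennreal_less_top order.strict_trans1 by (metis infinity_ennreal_def)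
    then obtain Rr where Rr: "Rint = ennreal Rr" "Rr \<ge> 0"
      by (cases Rint rule: ennreal_cases) (auto simp: infinity_ennreal_def)
    have lorint: "(\<integral>\<^sup>+ t\<in>{0<..}. ennreal ((real (distr_count B snd t) * t powr \<alpha>) powr (q / \<alpha>) / t) \<partial>lborel) = Rint"
      unfolding Rint_def
    proof (intro nn_integral_cong)
      fix t :: real
      have "{j\<in>B. \<bar>snd j\<bar> \<ge> t} = {j\<in>B. t \<le> snd j}" using pos by force
      then have "distr_count B snd t = card {j\<in>B. t \<le> snd j}" by (simp add: distr_count_def)
      moreover have "q / \<alpha> = \<gamma>" using al pp by (simp add: q_def \<gamma>_def)
      ultimately show "ennreal ((real (distr_count B snd t) * t powr \<alpha>) powr (q / \<alpha>) / t) * indicator {0<..} t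
          = ennreal (indicator {0<..} t * ((real (card {j\<in>B. t \<le> snd j}) * t powr \<alpha>) powr \<gamma> / t))"
        by (simp add: indicator_def)
    qed
    have lor: "lorentz_norm \<alpha> q B snd = (q * Rr) powr (1/q)"
      unfolding lorentz_norm_def lorint using Rr by simp
    have Ibound: "(\<integral>\<^sup>+ t\<in>{0<..}. ennreal ((t powr (-\<theta>) * Kfun X0 n0 X1 n1 t f) powr h / t) \<partial>lborel)
        \<le> ennreal Ctot * Rint"
    proof -
      have "(\<integral>\<^sup>+ t\<in>{0<..}. ennreal ((t powr (-\<theta>) * Kfun X0 n0 X1 n1 t f) powr h / t) \<partial>lborel)
        \<le> (\<integral>\<^sup>+t. ennreal (k * (indicator {0<..} t * ((
            (\<Sum>j\<in>{j\<in>B. snd j < t powr c}. snd j powr \<alpha>0) * (t powr c) powr (\<alpha>-\<alpha>0)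
          + (\<Sum>j\<in>{j\<in>B. t powr c \<le> snd j}. snd j powr \<alpha>1) * (t powr c) powr (\<alpha>-\<alpha>1)) powr \<gamma> / t))) \<partial>lborel)"
      proof (rule nn_integral_mono)
        fix t :: real
        show "ennreal ((t powr (-\<theta>) * Kfun X0 n0 X1 n1 t f) powr h / t) * indicator {0<..} t
          \<le> ennreal (k * (indicator {0<..} t * ((
            (\<Sum>j\<in>{j\<in>B. snd j < t powr c}. snd j powr \<alpha>0) * (t powr c) powr (\<alpha>-\<alpha>0)
          + (\<Sum>j\<in>{j\<in>B. t powr c \<le> snd j}. snd j powr \<alpha>1) * (t powr c) powr (\<alpha>-\<alpha>1)) powr \<gamma> / t)))"
        proof (cases "t > 0")
          case False then show ?thesis by (simp add: indicator_def)
        next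
          case True
          define \<sigma> where "\<sigma> = t powr c"
          define A where "A = {j\<in>B. snd j < \<sigma>}"
          define Bc where "Bc = {j\<in>B. \<sigma> \<le> snd j}"
          have admA: "admissible_balls A" using adm by (rule admissible_subset) (auto simp: A_def)
          have admB: "admissible_balls Bc" using adm by (rule admissible_subset) (auto simp: Bc_def)
          define x0 where "x0 = emb (ball_sum \<phi> A)"
          define x1 where "x1 = emb (ball_sum \<phi> Bc)"
          have fsplit: "f = x0 + x1"
            unfolding f_def x0_def x1_def A_def Bc_def
            by (subst ball_sum_split[OF fin, of \<phi> \<sigma>]) (rule emb_add)
          define S0 where "S0 = (\<Sum>j\<in>A. snd j powr \<alpha>0)"
          define S1 where "S1 = (\<Sum>j\<in>Bc. snd j powr \<alpha>1)"
          have S0: "S0 \<ge> 0" and S1: "S1 \<ge> 0" by (auto simp: S0_def S1_def intro: sum_nonneg)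
          have x0X: "x0 \<in> X0" and n0x: "n0 x0 \<le> C0 * S0 powr (1/p)"
            using hC0 admA by (auto simp: x0_def S0_def split_def)
          have x1X: "x1 \<in> X1" and n1x: "n1 x1 \<le> C1 * S1 powr (1/p)"
            using hC1 admB by (auto simp: x1_def S1_def split_def)
          have "n0 x0 \<le> Cm * S0 powr (1/p)"
            using n0x Cm by (meson mult_right_mono order_trans powr_ge_zero)
          moreover have "n1 x1 \<le> Cm * S1 powr (1/p)"
            using n1x Cm by (meson mult_right_mono order_trans powr_ge_zero)
          ultimately have "n0 x0 + t * n1 x1 \<le> Cm * S0 powr (1/p) + t * (Cm * S1 powr (1/p))"
            using True by (simp add: add_mono mult_left_mono)
          moreover have "Kfun X0 n0 X1 n1 t f \<le> n0 x0 + t * n1 x1"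
            unfolding fsplit using kfun_le(1)[OF b0 b1 x0X x1X] True by simp
          ultimately have Kle: "Kfun X0 n0 X1 n1 t f \<le> Cm * S0 powr (1/p) + t * (Cm * S1 powr (1/p))"
            by linarith
          have K0: "0 \<le> Kfun X0 n0 X1 n1 t f"
            unfolding fsplit using kfun_le(2)[OF b0 b1 x0X x1X] True by simp
          have "(t powr (-\<theta>) * Kfun X0 n0 X1 n1 t f) powr h / t
             \<le> (2*Cm) powr h * ((S0 * (t powr c) powr (\<alpha>-\<alpha>0) + S1 * (t powr c) powr (\<alpha>-\<alpha>1)) powr (h/p) / t)"
            by (rule pw_alg[OF True K0 S0 S1 Cm(1) pp h bt Kle ex0 ex1 c_def])
          then show ?thesis using True
            by (simp add: indicator_def k_def \<gamma>_def S0_def S1_def A_def Bc_def \<sigma>_def ennreal_leI)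
        qed
      qed
      also have "\<dots> \<le> ennreal (k*Kc * (2/(c*(\<epsilon>*\<gamma>)))) * Rint"
        unfolding Kc_def Rint_def by (rule integral_bound[OF fin pos ep al g cp k])
      finally show ?thesis by (simp add: Ctot_def)
    qed
    define I where "I = (\<integral>\<^sup>+ t\<in>{0<..}. ennreal ((t powr (-\<theta>) * Kfun X0 n0 X1 n1 t f) powr h / t) \<partial>lborel)"
    have IR: "I \<le> ennreal (Ctot * Rr)" using Ibound Rr Ctot by (simp add: I_def ennreal_mult)
    have Ilt: "I < \<infinity>" by (rule le_less_trans[OF IR]) simp
    then have Itop: "I \<noteq> \<infinity>" by simp
    have "enn2real I \<le> enn2real (ennreal (Ctot * Rr))" by (rule enn2real_mono[OF IR]) simp
    then have I0: "enn2real I \<le> Ctot * Rr" using Ctot Rr by simp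
    have "interp_norm X0 n0 X1 n1 \<theta> h f = ennreal (enn2real I powr (1/h))"
      unfolding interp_norm_def I_def[symmetric] Let_def using Itop by simp
    also have "\<dots> \<le> ennreal ((Ctot * Rr) powr (1/h))"
      using I0 h by (intro ennreal_leI powr_mono2) auto
    also have "(Ctot * Rr) powr (1/h) = C * lorentz_norm \<alpha> (h * \<alpha> / p) B snd powr (\<alpha> / p)"
    proof -
      have "lorentz_norm \<alpha> (h * \<alpha> / p) B snd powr (\<alpha> / p) = ((q * Rr) powr (1/q)) powr (\<alpha>/p)"
        using lor by (simp add: q_def)
      also have "\<dots> = (q * Rr) powr (1/h)"
      proof -
        have "1/q * (\<alpha>/p) = 1/h" using al pp h by (simp add: q_def field_simps)
        then show ?thesis by (simp add: powr_powr)
      qed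
      finally have "C * lorentz_norm \<alpha> (h * \<alpha> / p) B snd powr (\<alpha> / p) = (Ctot / q) powr (1/h) * (q * Rr) powr (1/h)"
        by (simp add: C_def)
      also have "\<dots> = (Ctot / q * (q * Rr)) powr (1/h)"
        using Ctot q Rr by (subst powr_mult) auto
      also have "Ctot / q * (q * Rr) = Ctot * Rr" using q by simp
      finally show ?thesis by simp
    qed
    finally show "interp_norm X0 n0 X1 n1 \<theta> h (emb (ball_sum \<phi> B))
        \<le> ennreal (C * lorentz_norm \<alpha> (h * \<alpha> / p) B snd powr (\<alpha> / p))"
      by (simp add: f_def)
  qed
qed


end
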